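(* Let $N\ge1$ and $0\le m\le r\le n$. Every $L\in\mathcal L^N_{r,m}$ can be written uniquely as $L=\sum_{|J|\le r}p_J\,K_J$ with $p_J\in\mathcal P^N_{r-m}$, and every such sum lies in $\mathcal L^N_{r,m}$; i.e. $\mathcal L^N_{r,m}=\mathcal P^N_{r-m}\otimes\mathcal L^N_{r,r}$. Consequently $$\dim\mathcal L^N_{r,m}=\binom{N+r-m}{r-m}\binom{N+r}{r}.$$
   Context: Variables $x=(x_1,\dots,x_N)$; for a multi-index $I=(i_1,\dots,i_N)\in\mathbb N^N$, $|I|=i_1+\dots+i_N$, $x^I=x_1^{i_1}\cdots x_N^{i_N}$, $D_I=\partial^{|I|}/\partial x_1^{i_1}\cdots\partial x_N^{i_N}$. $\mathcal P^N_s$ is the span of the monomials $x^I$ with $|I|\le s$ (and $\{0\}$ for $s<0$). Euler operator $E=\sum_{i=1}^N x_i\partial/\partial x_i$; Pochhammer operator $(a-E)_k=(-1)^k(E-a)(E-(a-1))\cdots(E-(a-k+1))$. For $|J|\le r$, $K_J=(n-|J|-E)_{r-|J|}D_J$. $\mathcal L^N_{r,m}$ is the real vector space of linear differential operators $\sum_{|I|\le r}a_I(x)D_I$ with polynomial coefficients (order at most $r$) mapping $\mathcal P^N_n$ into $\mathcal P^N_{n-m}$. *)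

theory Defs
  imports Complex_Main "HOL-Library.Poly_Mapping" "HOL-Library.Function_Algebras"
begin

text \<open>Multi-indices I in N^N are finitely supported maps nat =>0 nat whose Poly_Mapping.keys lie in
  {..<N}; a real polynomial is a finitely supported map from exponent vectors to real
  coefficients (monomial x^K has exponent vector K).\<close>

type_synonym mindex = "nat \<Rightarrow>\<^sub>0 nat"
type_synonym mpoly = "mindex \<Rightarrow>\<^sub>0 real"

definition mdeg :: "mindex \<Rightarrow> nat" where
  "mdeg I = (\<Sum>i\<in>Poly_Mapping.keys I. Poly_Mapping.lookup I i)"

definition MI :: "nat \<Rightarrow> nat \<Rightarrow> mindex set" where
  "MI N r = {I. Poly_Mapping.keys I \<subseteq> {..<N} \<and> mdeg I \<le> r}"

text \<open>polynomials in x_1..x_N (variables indexed 0..N-1)\<close>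
definition polys :: "nat \<Rightarrow> mpoly set" where
  "polys N = {p. \<forall>K\<in>Poly_Mapping.keys p. Poly_Mapping.keys K \<subseteq> {..<N}}"

definition Pspace :: "nat \<Rightarrow> nat \<Rightarrow> mpoly set" where
  "Pspace N s = {p. \<forall>K\<in>Poly_Mapping.keys p. Poly_Mapping.keys K \<subseteq> {..<N} \<and> mdeg K \<le> s}"

definition xmon :: "mindex \<Rightarrow> mpoly" where
  "xmon K = Poly_Mapping.single K 1"

definition cpoly :: "real \<Rightarrow> mpoly" where
  "cpoly c = Poly_Mapping.single 0 c"

definition pd :: "nat \<Rightarrow> mpoly \<Rightarrow> mpoly" where
  "pd i p = (\<Sum>K\<in>Poly_Mapping.keys p. cpoly (Poly_Mapping.lookup p K * real (Poly_Mapping.lookup K i))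
                           * xmon (K - Poly_Mapping.single i 1))"

definition Dop :: "nat \<Rightarrow> mindex \<Rightarrow> mpoly \<Rightarrow> mpoly" where
  "Dop N I p = foldr (\<lambda>i q. (pd i ^^ Poly_Mapping.lookup I i) q) [0..<N] p"

definition euler :: "nat \<Rightarrow> mpoly \<Rightarrow> mpoly" where
  "euler N p = (\<Sum>i<N. xmon (Poly_Mapping.single i 1) * pd i p)"

text \<open>Pochhammer operator (a-E)_k = (-1)^k (E-a)(E-(a-1))...(E-(a-k+1))
  = (a-E)(a-1-E)...(a-k+1-E)  (the factors commute)\<close>
primrec pochE :: "nat \<Rightarrow> real \<Rightarrow> nat \<Rightarrow> mpoly \<Rightarrow> mpoly" where
  "pochE N a 0 p = p"
| "pochE N a (Suc k) p =
     cpoly (a - real k) * pochE N a k p - euler N (pochE N a k p)"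

definition Kop :: "nat \<Rightarrow> nat \<Rightarrow> nat \<Rightarrow> mindex \<Rightarrow> mpoly \<Rightarrow> mpoly" where
  "Kop N n r J p = pochE N (real n - real (mdeg J)) (r - mdeg J) (Dop N J p)"

definition diffop :: "nat \<Rightarrow> nat \<Rightarrow> (mindex \<Rightarrow> mpoly) \<Rightarrow> mpoly \<Rightarrow> mpoly" where
  "diffop N r a p = (\<Sum>I\<in>MI N r. a I * Dop N I p)"

text \<open>L^N_{r,m}: linear differential operators of order at most r with polynomial
  coefficients (in x_1..x_N) mapping P^N_n into P^N_{n-m}; operators are identified
  with the maps they induce on polynomials.\<close>
definition Lspace :: "nat \<Rightarrow> nat \<Rightarrow> nat \<Rightarrow> nat \<Rightarrow> (mpoly \<Rightarrow> mpoly) set" where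
  "Lspace N n r m = {L. (\<exists>a. (\<forall>I. a I \<in> polys N) \<and> L = diffop N r a)
                        \<and> (\<forall>p\<in>Pspace N n. L p \<in> Pspace N (n - m))}"

definition op_scale :: "real \<Rightarrow> (mpoly \<Rightarrow> mpoly) \<Rightarrow> (mpoly \<Rightarrow> mpoly)" where
  "op_scale c L = (\<lambda>p. cpoly c * L p)"

end

theory Submission
  imports Defs
begin


abbreviation lk :: "('a \<Rightarrow>\<^sub>0 'b::zero) \<Rightarrow> 'a \<Rightarrow> 'b" where "lk \<equiv> Poly_Mapping.lookup"
abbreviation ks :: "('a \<Rightarrow>\<^sub>0 'b::zero) \<Rightarrow> 'a set" where "ks \<equiv> Poly_Mapping.keys"

lemma lookup_cpoly_mult[simp]: "lk (cpoly c * f) X = c * lk f X"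
proof -
  have "cpoly c * f = Poly_Mapping.map ((*) c) f"
    by (simp add: cpoly_def mult_map_scale_conv_mult)
  then show ?thesis by (simp add: Poly_Mapping.map.rep_eq when_def)
qed

lemma cpoly_0[simp]: "cpoly 0 = 0" by (simp add: cpoly_def)
lemma cpoly_1[simp]: "cpoly 1 = 1" by (simp add: cpoly_def)
lemma cpoly_add: "cpoly (a + b) = cpoly a + cpoly b" by (simp add: cpoly_def single_add)
lemma cpoly_mult: "cpoly (a * b) = cpoly a * cpoly b" by (simp add: cpoly_def mult_single)
lemma cpoly_minus: "cpoly (a - b) = cpoly a - cpoly b" by (simp add: cpoly_def single_diff)
lemma xmon_mult: "xmon A * xmon B = xmon (A + B)" by (simp add: xmon_def mult_single)
lemma xmon_0[simp]: "xmon 0 = 1" by (simp add: xmon_def)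
lemma xmon_nz[simp]: "xmon A \<noteq> 0" by (metis xmon_def lookup_single_eq lookup_zero zero_neq_one)
lemma mult_if01[simp]: "(c::real) * (if P then 1 else 0) = (if P then c else 0)" by simp
lemma cpoly_xmon: "cpoly c * xmon K = Poly_Mapping.single K c" by (simp add: cpoly_def xmon_def mult_single)
lemma keys_xmon[simp]: "ks (xmon K) = {K}" by (simp add: xmon_def)
lemma lookup_xmon: "lk (xmon K) X = (if X = K then 1 else 0)" by (simp add: xmon_def lookup_single when_def)
lemma cpoly_eq_iff[simp]: "cpoly a = cpoly b \<longleftrightarrow> a = b" by (metis cpoly_def lookup_single_eq)

lemma poly_expand:
  assumes "finite A" "ks f \<subseteq> A"
  shows "f = (\<Sum>K\<in>A. cpoly (lk f K) * xmon K)"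
proof (rule poly_mapping_eqI)
  fix X
  have "lk (\<Sum>K\<in>A. cpoly (lk f K) * xmon K) X = (\<Sum>K\<in>A. if K = X then lk f K else 0)"
    by (simp add: lookup_sum lookup_xmon eq_commute)
  also have "\<dots> = lk f X" using assms by (auto simp: in_keys_iff)
  finally show "lk f X = lk (\<Sum>K\<in>A. cpoly (lk f K) * xmon K) X" by simp
qed

definition mle :: "mindex \<Rightarrow> mindex \<Rightarrow> bool" where
  "mle A B \<longleftrightarrow> (\<forall>i. lk A i \<le> lk B i)"

lemma lookup_mult_xmon:
  "lk (f * xmon M) X = (if mle M X then lk f (X - M) else 0)"
proof -
  have "f * xmon M = (\<Sum>K\<in>ks f. cpoly (lk f K) * xmon K) * xmon M"
    using poly_expand[of "ks f" f] by simp
  also have "\<dots> = (\<Sum>K\<in>ks f. cpoly (lk f K) * xmon (K + M))"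
    by (simp add: sum_distrib_right mult.assoc xmon_mult)
  finally have "lk (f * xmon M) X = (\<Sum>K\<in>ks f. if X = K + M then lk f K else 0)"
    by (simp add: lookup_sum lookup_xmon)
  also have "\<dots> = (if mle M X then lk f (X - M) else 0)"
  proof (cases "mle M X")
    case True
    have eq: "X = K + M \<longleftrightarrow> K = X - M" for K
      using True by (auto simp: mle_def poly_mapping_eq_iff lookup_add lookup_minus fun_eq_iff)
    show ?thesis using True by (simp add: eq in_keys_iff)
  next
    case False
    have "X \<noteq> K + M" for K using False by (auto simp: mle_def lookup_add)
    then show ?thesis using False by simp
  qed
  finally show ?thesis .
qed



definition plin :: "(mpoly \<Rightarrow> mpoly) \<Rightarrow> bool" where
  "plin T \<longleftrightarrow> (\<forall>p q. T (p + q) = T p + T q) \<and> (\<forall>c p. T (cpoly c * p) = cpoly c * T p)"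

lemma plinD: "plin T \<Longrightarrow> T (p + q) = T p + T q" "plin T \<Longrightarrow> T (cpoly c * p) = cpoly c * T p"
  by (auto simp: plin_def)

lemma plin_zero: "plin T \<Longrightarrow> T 0 = 0"
  using plinD(1)[of T 0 0] by simp

lemma plin_diff: "plin T \<Longrightarrow> T (p - q) = T p - T q"
  using plinD(1)[of T "p - q" q] by (simp add: eq_diff_eq)

lemma plin_sum: assumes "plin T" shows "T (\<Sum>x\<in>A. f x) = (\<Sum>x\<in>A. T (f x))"
  by (induction A rule: infinite_finite_induct) (simp_all add: plin_zero[OF assms] plinD(1)[OF assms])

lemma plin_expand:
  assumes "plin T" shows "T p = (\<Sum>K\<in>ks p. cpoly (lk p K) * T (xmon K))"
proof -
  have "T p = T (\<Sum>K\<in>ks p. cpoly (lk p K) * xmon K)" using poly_expand[of "ks p" p] by simp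
  also have "\<dots> = (\<Sum>K\<in>ks p. T (cpoly (lk p K) * xmon K))" by (rule plin_sum[OF assms])
  also have "\<dots> = (\<Sum>K\<in>ks p. cpoly (lk p K) * T (xmon K))" by (simp add: plinD[OF assms])
  finally show ?thesis .
qed

lemma plin_eqI:
  assumes "plin T" "plin U" "\<And>K. T (xmon K) = U (xmon K)" shows "T = U"
proof
  fix p
  have "T p = (\<Sum>K\<in>ks p. cpoly (lk p K) * T (xmon K))" by (rule plin_expand[OF assms(1)])
  also have "\<dots> = (\<Sum>K\<in>ks p. cpoly (lk p K) * U (xmon K))" using assms(3) by simp
  also have "\<dots> = U p" by (rule plin_expand[OF assms(2), symmetric])
  finally show "T p = U p" .
qed

lemma plin_const0: "plin (\<lambda>p. 0)" by (simp add: plin_def)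
lemma plin_id: "plin (\<lambda>p. p)" by (simp add: plin_def)
lemma plin_comp: "plin T \<Longrightarrow> plin U \<Longrightarrow> plin (\<lambda>p. T (U p))" by (simp add: plin_def)
lemma plin_add: "plin T \<Longrightarrow> plin U \<Longrightarrow> plin (\<lambda>p. T p + U p)"
  by (simp add: plin_def add_ac distrib_left)
lemma plin_sub: "plin T \<Longrightarrow> plin U \<Longrightarrow> plin (\<lambda>p. T p - U p)"
  by (simp add: plin_def diff_add_eq add_diff_eq right_diff_distrib)
lemma plin_lmult: "plin T \<Longrightarrow> plin (\<lambda>p. f * T p)"
  by (simp add: plin_def distrib_left mult.left_commute)
lemma plin_rmult: "plin (\<lambda>p. p * g)"
  by (simp add: plin_def distrib_right mult.assoc)
lemma plin_sumf: "(\<And>x. x \<in> A \<Longrightarrow> plin (T x)) \<Longrightarrow> plin (\<lambda>p. \<Sum>x\<in>A. T x p)"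
proof (induction A rule: infinite_finite_induct)
  case (insert x F)
  then have "plin (T x)" "plin (\<lambda>p. \<Sum>x\<in>F. T x p)" by auto
  then have "plin (\<lambda>p. T x p + (\<Sum>x\<in>F. T x p))" by (rule plin_add)
  then show ?case using insert.hyps by simp
qed (simp_all add: plin_const0)
lemma plin_funpow: "plin T \<Longrightarrow> plin (T ^^ k)"
proof (induction k)
  case 0 then show ?case using plin_id by (simp add: id_def)
next
  case (Suc k) then show ?case using plin_comp[of T "T ^^ k"] by simp
qed

lemma plin_zeroI: "plin T \<Longrightarrow> (\<And>K. T (xmon K) = 0) \<Longrightarrow> T p = 0"
  using plin_eqI[of T "\<lambda>p. 0"] plin_const0 by metis

lemma pd_alt:
  assumes "finite A" "ks p \<subseteq> A"
  shows "pd i p = (\<Sum>K\<in>A. cpoly (lk p K * real (lk K i)) * xmon (K - Poly_Mapping.single i 1))"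
  unfolding pd_def using assms
  by (intro sum.mono_neutral_left) (auto simp: in_keys_iff)

lemma plin_pd: "plin (pd i)"
proof -
  have add: "pd i (p + q) = pd i p + pd i q" for p q
  proof -
    let ?A = "ks p \<union> ks q \<union> ks (p + q)"
    show ?thesis
      by (subst (1 2 3) pd_alt[of ?A]) (auto simp: lookup_add distrib_right cpoly_add sum.distrib)
  qed
  have sc: "pd i (cpoly c * p) = cpoly c * pd i p" for c p
  proof -
    let ?A = "ks p \<union> ks (cpoly c * p)"
    show ?thesis
      by (subst (1 2) pd_alt[of ?A]) (auto simp: sum_distrib_left cpoly_mult mult.assoc)
  qed
  show ?thesis using add sc by (simp add: plin_def)
qed

lemma pd_xmon: "pd i (xmon K) = cpoly (real (lk K i)) * xmon (K - Poly_Mapping.single i 1)"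
  by (simp add: pd_def lookup_xmon)

definition ff :: "nat \<Rightarrow> nat \<Rightarrow> real" where
  "ff a b = (\<Prod>j<b. real a - real j)"

lemma ff_zero: "a < b \<Longrightarrow> ff a b = 0"
  unfolding ff_def by (rule prod_zero) auto

lemma ff_nz: "b \<le> a \<Longrightarrow> ff a b \<noteq> 0"
  unfolding ff_def by (subst prod_zero_iff) auto

lemma ff_Suc: "ff a (Suc b) = ff a b * (real a - real b)"
  unfolding ff_def by simp

lemma ff_nz_iff: "ff a b \<noteq> 0 \<longleftrightarrow> b \<le> a"
  using ff_zero[of a b] ff_nz[of b a] by (cases "b \<le> a") auto

lemma pd_pow_xmon:
  "(pd i ^^ k) (cpoly c * xmon K) = cpoly (c * ff (lk K i) k) * xmon (K - Poly_Mapping.single i k)"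
proof (induction k)
  case 0
  then show ?case by (simp add: ff_def)
next
  case (Suc k)
  have "(pd i ^^ Suc k) (cpoly c * xmon K) = pd i (cpoly (c * ff (lk K i) k) * xmon (K - Poly_Mapping.single i k))"
    using Suc by simp
  also have "\<dots> = cpoly (c * ff (lk K i) k) * (cpoly (real (lk K i - k)) * xmon (K - Poly_Mapping.single i k - Poly_Mapping.single i 1))"
    by (simp add: plinD[OF plin_pd] pd_xmon lookup_minus)
  also have "K - Poly_Mapping.single i k - Poly_Mapping.single i 1 = K - Poly_Mapping.single i (Suc k)"
    by (rule poly_mapping_eqI) (simp add: lookup_minus lookup_single when_def)
  also have "c * ff (lk K i) k * real (lk K i - k) = c * ff (lk K i) (Suc k)"
  proof (cases "k \<le> lk K i")
    case True then show ?thesis by (simp add: ff_Suc of_nat_diff)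
  next
    case False then show ?thesis by (simp add: ff_Suc ff_zero)
  qed
  ultimately show ?case by (simp add: mult.assoc[symmetric] cpoly_mult[symmetric])
qed

lemma plin_foldr: "(\<And>i. plin (F i)) \<Longrightarrow> plin (foldr F xs)"
  by (induction xs) (auto simp: plin_def)

lemma plin_Dop: "plin (Dop N I)"
proof -
  have "plin (foldr (\<lambda>i q. (pd i ^^ lk I i) q) [0..<N])"
    by (rule plin_foldr) (simp add: plin_funpow plin_pd)
  then show ?thesis unfolding Dop_def by (simp add: plin_def)
qed

lemma foldr_xmon:
  assumes "distinct xs"
  shows "foldr (\<lambda>i q. (pd i ^^ lk I i) q) xs (cpoly c * xmon K) =
    cpoly (c * (\<Prod>i\<in>set xs. ff (lk K i) (lk I i))) * xmon (K - (\<Sum>i\<in>set xs. Poly_Mapping.single i (lk I i)))"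
  using assms
proof (induction xs)
  case Nil
  then show ?case by simp
next
  case (Cons x xs)
  let ?K = "K - (\<Sum>i\<in>set xs. Poly_Mapping.single i (lk I i))"
  have lx: "lk ?K x = lk K x"
    using Cons.prems by (simp add: lookup_minus lookup_sum lookup_single when_def)
  have "foldr (\<lambda>i q. (pd i ^^ lk I i) q) (x # xs) (cpoly c * xmon K)
     = (pd x ^^ lk I x) (cpoly (c * (\<Prod>i\<in>set xs. ff (lk K i) (lk I i))) * xmon ?K)"
    using Cons by simp
  also have "\<dots> = cpoly (c * (\<Prod>i\<in>set xs. ff (lk K i) (lk I i)) * ff (lk K x) (lk I x)) * xmon (?K - Poly_Mapping.single x (lk I x))"
    by (simp add: pd_pow_xmon lx)
  also have "?K - Poly_Mapping.single x (lk I x) = K - (\<Sum>i\<in>set (x#xs). Poly_Mapping.single i (lk I i))"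
    using Cons.prems by (intro poly_mapping_eqI) (simp add: lookup_minus lookup_add lookup_sum)
  also have "c * (\<Prod>i\<in>set xs. ff (lk K i) (lk I i)) * ff (lk K x) (lk I x) = c * (\<Prod>i\<in>set (x#xs). ff (lk K i) (lk I i))"
    using Cons.prems by simp
  finally show ?case .
qed

definition ffN :: "nat \<Rightarrow> mindex \<Rightarrow> mindex \<Rightarrow> real" where
  "ffN N K I = (\<Prod>i<N. ff (lk K i) (lk I i))"

lemma sum_single_keys:
  fixes I :: mindex and N :: nat
  assumes "ks I \<subseteq> {..<N}"
  shows "(\<Sum>i<N. Poly_Mapping.single i (lk I i)) = I"
proof (rule poly_mapping_eqI)
  fix k
  have "lk (\<Sum>i<N. Poly_Mapping.single i (lk I i)) k = (\<Sum>x<N. if x = k then lk I x else 0)"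
    by (simp add: lookup_sum lookup_single when_def)
  also have "\<dots> = (if k < N then lk I k else 0)" using sum.delta[OF finite_lessThan[of N], of k "lk I"] by simp
  also have "\<dots> = lk I k" using assms by (auto simp: in_keys_iff)
  finally show "lk (\<Sum>i<N. Poly_Mapping.single i (lk I i)) k = lk I k" .
qed

lemma Dop_cxmon:
  assumes "ks I \<subseteq> {..<N}"
  shows "Dop N I (cpoly c * xmon K) = cpoly (c * ffN N K I) * xmon (K - I)"
proof -
  have "Dop N I (cpoly c * xmon K) = foldr (\<lambda>i q. (pd i ^^ lk I i) q) [0..<N] (cpoly c * xmon K)"
    by (simp add: Dop_def)
  also have "\<dots> = cpoly (c * ffN N K I) * xmon (K - I)"
    by (subst foldr_xmon) (simp_all add: ffN_def atLeast0LessThan sum_single_keys[OF assms])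
  finally show ?thesis .
qed

lemma Dop_xmon:
  assumes "ks I \<subseteq> {..<N}"
  shows "Dop N I (xmon K) = cpoly (ffN N K I) * xmon (K - I)"
  using Dop_cxmon[OF assms, of 1 K] by simp



definition degN :: "nat \<Rightarrow> mindex \<Rightarrow> nat" where
  "degN N K = (\<Sum>i<N. lk K i)"

lemma cpoly_sum: "cpoly (sum f A) = (\<Sum>x\<in>A. cpoly (f x))"
  by (induction A rule: infinite_finite_induct) (simp_all add: cpoly_add)

lemma plin_euler: "plin (euler N)"
proof -
  have "plin (\<lambda>p. \<Sum>i<N. xmon (Poly_Mapping.single i 1) * pd i p)"
    by (rule plin_sumf) (rule plin_lmult[OF plin_pd])
  then show ?thesis by (simp add: euler_def[abs_def])
qed

lemma euler_xmon: "euler N (xmon K) = cpoly (real (degN N K)) * xmon K"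
proof -
  have t: "xmon (Poly_Mapping.single i 1) * pd i (xmon K) = cpoly (real (lk K i)) * xmon K" for i
  proof (cases "lk K i = 0")
    case True then show ?thesis by (simp add: pd_xmon)
  next
    case False
    have "Poly_Mapping.single i 1 + (K - Poly_Mapping.single i 1) = K"
      using False by (intro poly_mapping_eqI) (auto simp: lookup_add lookup_minus lookup_single when_def)
    then show ?thesis by (simp add: pd_xmon mult.left_commute xmon_mult)
  qed
  have "euler N (xmon K) = (\<Sum>i<N. cpoly (real (lk K i)) * xmon K)"
    unfolding euler_def t by (rule refl)
  also have "\<dots> = cpoly (\<Sum>i<N. real (lk K i)) * xmon K"
    by (simp add: sum_distrib_right cpoly_sum)
  finally show ?thesis by (simp add: degN_def)
qed

lemma plin_pochE: "plin (pochE N a k)"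
proof (induction k)
  case 0 then show ?case using plin_id by (simp add: pochE.simps(1)[abs_def])
next
  case (Suc k)
  have "plin (\<lambda>p. cpoly (a - real k) * pochE N a k p - euler N (pochE N a k p))"
    by (rule plin_sub[OF plin_lmult[OF Suc] plin_comp[OF plin_euler Suc]])
  then show ?case by (simp add: pochE.simps(2)[abs_def])
qed

lemma pochE_xmon:
  "pochE N a k (cpoly c * xmon K) = cpoly (c * (\<Prod>j<k. a - real j - real (degN N K))) * xmon K"
proof (induction k)
  case 0 then show ?case by simp
next
  case (Suc k)
  let ?c = "c * (\<Prod>j<k. a - real j - real (degN N K))"
  have "pochE N a (Suc k) (cpoly c * xmon K) = cpoly (a - real k) * (cpoly ?c * xmon K) - euler N (cpoly ?c * xmon K)"
    using Suc by simp
  also have "\<dots> = cpoly ((a - real k) * ?c) * xmon K - cpoly (?c * real (degN N K)) * xmon K"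
    by (simp add: plinD[OF plin_euler] euler_xmon cpoly_mult mult.assoc)
  also have "\<dots> = cpoly ((a - real k) * ?c - ?c * real (degN N K)) * xmon K"
    by (simp add: cpoly_minus left_diff_distrib)
  also have "(a - real k) * ?c - ?c * real (degN N K) = ?c * (a - real k - real (degN N K))"
    by (simp add: algebra_simps)
  finally show ?case by (simp add: mult.assoc)
qed

definition kc :: "nat \<Rightarrow> nat \<Rightarrow> nat \<Rightarrow> mindex \<Rightarrow> mindex \<Rightarrow> real" where
  "kc N n r K J = ffN N K J * (\<Prod>j<r - mdeg J. real n - real (mdeg J) - real j - real (degN N (K - J)))"

lemma plin_Kop: "plin (Kop N n r J)"
  using plin_comp[OF plin_pochE plin_Dop] by (simp add: Kop_def[abs_def])

lemma Kop_xmon: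
  assumes "ks J \<subseteq> {..<N}"
  shows "Kop N n r J (xmon K) = cpoly (kc N n r K J) * xmon (K - J)"
  by (simp add: Kop_def Dop_xmon[OF assms] pochE_xmon kc_def)

lemma pd_xmon_mult_xmon:
  "pd i (xmon A * xmon B) = pd i (xmon A) * xmon B + xmon A * pd i (xmon B)"
proof -
  let ?e = "Poly_Mapping.single i (1::nat)"
  have 1: "cpoly (real (lk A i)) * xmon (A + B - ?e) = cpoly (real (lk A i)) * xmon (A - ?e + B)"
  proof (cases "lk A i = 0")
    case False
    then have "A + B - ?e = A - ?e + B"
      by (intro poly_mapping_eqI) (auto simp: lookup_add lookup_minus lookup_single when_def)
    then show ?thesis by simp
  qed simp
  have 2: "cpoly (real (lk B i)) * xmon (A + B - ?e) = cpoly (real (lk B i)) * xmon (A + (B - ?e))"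
  proof (cases "lk B i = 0")
    case False
    then have "A + B - ?e = A + (B - ?e)"
      by (intro poly_mapping_eqI) (auto simp: lookup_add lookup_minus lookup_single when_def)
    then show ?thesis by simp
  qed simp
  have "pd i (xmon A * xmon B) = cpoly (real (lk A i)) * xmon (A + B - ?e) + cpoly (real (lk B i)) * xmon (A + B - ?e)"
    by (simp add: xmon_mult pd_xmon lookup_add cpoly_add distrib_right)
  also have "\<dots> = pd i (xmon A) * xmon B + xmon A * pd i (xmon B)"
    unfolding 1 2 by (simp add: pd_xmon xmon_mult mult.assoc mult.left_commute)
  finally show ?thesis .
qed

lemma plin_rmultT: "plin T \<Longrightarrow> plin (\<lambda>p. T p * g)"
  using plin_comp[OF plin_rmult, of T g] by simp

lemma pd_mult: "pd i (f * g) = pd i f * g + f * pd i g"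
proof -
  have pl: "plin (\<lambda>g. pd i (f * g) - (pd i f * g + f * pd i g))" for f
    by (intro plin_sub plin_add plin_comp[OF plin_pd] plin_lmult plin_pd plin_id)
  have A: "pd i (xmon A * g) = pd i (xmon A) * g + xmon A * pd i g" for A g
    using plin_zeroI[OF pl[of "xmon A"], of g] pd_xmon_mult_xmon[of i A] by simp
  have pl2: "plin (\<lambda>f. pd i (f * g) - (pd i f * g + f * pd i g))"
    by (intro plin_sub plin_add plin_comp[OF plin_pd] plin_rmult plin_pd plin_rmultT plin_lmult)
  show ?thesis using plin_zeroI[OF pl2, of f] A by simp
qed



lemma ffN_Suc:
  assumes "i < N"
  shows "ffN N K (I + Poly_Mapping.single i 1) = ffN N K I * (real (lk K i) - real (lk I i))"
proof -
  have "ffN N K (I + Poly_Mapping.single i 1) = ff (lk K i) (lk I i + 1) * (\<Prod>j\<in>{..<N} - {i}. ff (lk K j) (lk I j))"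
    unfolding ffN_def using assms
    by (subst prod.remove[of _ i]) (auto simp: lookup_add lookup_single intro!: prod.cong)
  also have "\<dots> = ffN N K I * (real (lk K i) - real (lk I i))"
    unfolding ffN_def using assms by (subst (2) prod.remove[of _ i]) (auto simp: ff_Suc)
  finally show ?thesis .
qed

lemma ffN_zero: "i < N \<Longrightarrow> lk K i < lk I i \<Longrightarrow> ffN N K I = 0"
  unfolding ffN_def by (rule prod_zero) (auto intro!: bexI[of _ i] ff_zero)

lemma pd_Dop:
  assumes "i < N" "ks I \<subseteq> {..<N}"
  shows "pd i (Dop N I p) = Dop N (I + Poly_Mapping.single i 1) p"
proof -
  have kI: "ks (I + Poly_Mapping.single i 1) \<subseteq> {..<N}"
    using assms keys_add[of I "Poly_Mapping.single i 1"] by auto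
  have "(\<lambda>p. pd i (Dop N I p)) = Dop N (I + Poly_Mapping.single i 1)"
  proof (rule plin_eqI[OF plin_comp[OF plin_pd plin_Dop] plin_Dop])
    fix K
    have e: "K - I - Poly_Mapping.single i 1 = K - (I + Poly_Mapping.single i 1)"
      by (intro poly_mapping_eqI) (simp add: lookup_add lookup_minus)
    have c: "ffN N K I * real (lk K i - lk I i) = ffN N K (I + Poly_Mapping.single i 1)"
    proof (cases "lk I i \<le> lk K i")
      case True then show ?thesis using ffN_Suc[OF assms(1), of K I] by (simp add: of_nat_diff)
    next
      case False then show ?thesis using ffN_Suc[OF assms(1), of K I] by (simp add: ffN_zero[OF assms(1)])
    qed
    have "pd i (Dop N I (xmon K)) = cpoly (ffN N K I) * pd i (xmon (K - I))"
      by (simp add: Dop_xmon[OF assms(2)] plinD[OF plin_pd])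
    also have "\<dots> = cpoly (ffN N K I) * (cpoly (real (lk K i - lk I i)) * xmon (K - I - Poly_Mapping.single i 1))"
      by (simp only: pd_xmon lookup_minus)
    also have "\<dots> = cpoly (ffN N K I * real (lk K i - lk I i)) * xmon (K - I - Poly_Mapping.single i 1)"
      by (simp only: cpoly_mult mult.assoc)
    also have "\<dots> = cpoly (ffN N K (I + Poly_Mapping.single i 1)) * xmon (K - (I + Poly_Mapping.single i 1))"
      by (simp only: c e)
    also have "\<dots> = Dop N (I + Poly_Mapping.single i 1) (xmon K)"
      by (rule Dop_xmon[OF kI, symmetric])
    finally show "pd i (Dop N I (xmon K)) = Dop N (I + Poly_Mapping.single i 1) (xmon K)" .
  qed
  then show ?thesis by (metis)
qed

lemma polysI: "(\<And>K. lk p K \<noteq> 0 \<Longrightarrow> ks K \<subseteq> {..<N}) \<Longrightarrow> p \<in> polys N"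
  by (auto simp: polys_def in_keys_iff)

lemma polysD: "p \<in> polys N \<Longrightarrow> lk p K \<noteq> 0 \<Longrightarrow> ks K \<subseteq> {..<N}"
  by (auto simp: polys_def in_keys_iff)

lemma polys_add: "p \<in> polys N \<Longrightarrow> q \<in> polys N \<Longrightarrow> p + q \<in> polys N"
  by (rule polysI) (metis add.right_neutral lookup_add polysD)

lemma polys_diff: "p \<in> polys N \<Longrightarrow> q \<in> polys N \<Longrightarrow> p - q \<in> polys N"
  by (rule polysI) (metis diff_zero diff_self lookup_minus polysD)

lemma polys_0: "0 \<in> polys N" by (simp add: polys_def)

lemma polys_sum: "(\<And>x. x \<in> A \<Longrightarrow> f x \<in> polys N) \<Longrightarrow> (\<Sum>x\<in>A. f x) \<in> polys N"
  by (induction A rule: infinite_finite_induct) (auto simp: polys_0 polys_add)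

lemma polys_mult: "p \<in> polys N \<Longrightarrow> q \<in> polys N \<Longrightarrow> p * q \<in> polys N"
  unfolding polys_def
proof safe
  fix K x
  assume p: "\<forall>K\<in>ks p. ks K \<subseteq> {..<N}" and q: "\<forall>K\<in>ks q. ks K \<subseteq> {..<N}"
    and K: "K \<in> ks (p * q)" and x: "x \<in> ks K"
  obtain a b where "K = a + b" "a \<in> ks p" "b \<in> ks q" using K keys_mult[of p q] by blast
  then show "x < N" using p q x keys_add[of a b] by blast
qed

lemma polys_cpoly: "cpoly c \<in> polys N" by (simp add: polys_def cpoly_def)
lemma polys_1: "1 \<in> polys N" by (simp add: polys_def)

lemma polys_xmon: "ks K \<subseteq> {..<N} \<Longrightarrow> xmon K \<in> polys N" by (simp add: polys_def)

lemma keys_diff_sub: "ks (K - (L::mindex)) \<subseteq> ks K"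
  by (auto simp: in_keys_iff lookup_minus)

lemma polys_pd: "p \<in> polys N \<Longrightarrow> pd i p \<in> polys N"
  unfolding pd_def
  by (intro polys_sum polys_mult polys_cpoly polys_xmon)
     (use keys_diff_sub in \<open>fastforce simp: polys_def\<close>)

lemma polys_euler: "p \<in> polys N \<Longrightarrow> euler N p \<in> polys N"
  unfolding euler_def
  by (intro polys_sum polys_mult polys_pd polys_xmon) auto

lemma mdeg_degN: "ks K \<subseteq> {..<N} \<Longrightarrow> mdeg K = degN N K"
  unfolding mdeg_def degN_def by (rule sum.mono_neutral_left) (auto simp: in_keys_iff)

lemma degN_add: "degN N (A + B) = degN N A + degN N B"
  by (simp add: degN_def lookup_add sum.distrib)

lemma degN_diff: "mle B A \<Longrightarrow> degN N (A - B) = degN N A - degN N B"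
  unfolding degN_def by (simp add: lookup_minus sum_subtractf_nat mle_def)

lemma degN_single: "i < N \<Longrightarrow> degN N (Poly_Mapping.single i k) = k"
  unfolding degN_def by (simp add: lookup_single when_def)

lemma lk_le_mdeg: "lk K i \<le> mdeg K"
proof (cases "i \<in> ks K")
  case True then show ?thesis unfolding mdeg_def by (intro member_le_sum) auto
qed (simp add: in_keys_iff)

lemma finite_MI: "finite (MI N s)"
proof (rule inj_on_finite)
  show "inj_on (\<lambda>I. map (lk I) [0..<N]) (MI N s)"
  proof (rule inj_onI)
    fix I J assume IJ: "I \<in> MI N s" "J \<in> MI N s" and eq: "map (lk I) [0..<N] = map (lk J) [0..<N]"
    show "I = J"
    proof (rule poly_mapping_eqI)
      fix k
      show "lk I k = lk J k"
      proof (cases "k < N")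
        case True
        have "map (lk I) [0..<N] ! k = map (lk J) [0..<N] ! k" by (simp only: eq)
        then show ?thesis using True by simp
      next
        case False
        then have "k \<notin> ks I" "k \<notin> ks J" using IJ by (auto simp: MI_def)
        then show ?thesis by (simp add: in_keys_iff)
      qed
    qed
  qed
  show "(\<lambda>I. map (lk I) [0..<N]) ` MI N s \<subseteq> {xs. set xs \<subseteq> {..s} \<and> length xs = N}"
    using lk_le_mdeg by (auto simp: MI_def intro: order_trans[OF lk_le_mdeg])
  show "finite {xs. set xs \<subseteq> {..s} \<and> length xs = N}" by (rule finite_lists_length_eq) auto
qed

definition isD :: "nat \<Rightarrow> nat \<Rightarrow> (mpoly \<Rightarrow> mpoly) \<Rightarrow> bool" where
  "isD N s T \<longleftrightarrow> (\<exists>a. (\<forall>I. a I \<in> polys N) \<and> T = diffop N s a)"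

lemma isD_Dop:
  assumes "J \<in> MI N s" "f \<in> polys N"
  shows "isD N s (\<lambda>q. f * Dop N J q)"
  unfolding isD_def
proof (intro exI conjI allI)
  let ?a = "\<lambda>I. if I = J then f else 0"
  show "?a I \<in> polys N" for I using assms polys_0 by auto
  show "(\<lambda>q. f * Dop N J q) = diffop N s ?a"
  proof
    fix q
    have "(\<Sum>I\<in>MI N s. ?a I * Dop N I q) = (\<Sum>I\<in>MI N s. if I = J then f * Dop N J q else 0)"
      by (intro sum.cong) auto
    also have "\<dots> = f * Dop N J q" using assms finite_MI[of N s] by simp
    finally show "f * Dop N J q = diffop N s ?a q" by (simp add: diffop_def)
  qed
qed

lemma isD_add: "isD N s T \<Longrightarrow> isD N s U \<Longrightarrow> isD N s (\<lambda>q. T q + U q)"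
  unfolding isD_def diffop_def
proof (elim exE conjE)
  fix a b assume a: "\<forall>I. a I \<in> polys N" "T = (\<lambda>p. \<Sum>I\<in>MI N s. a I * Dop N I p)"
    and b: "\<forall>I. b I \<in> polys N" "U = (\<lambda>p. \<Sum>I\<in>MI N s. b I * Dop N I p)"
  show "\<exists>c. (\<forall>I. c I \<in> polys N) \<and> (\<lambda>q. T q + U q) = (\<lambda>p. \<Sum>I\<in>MI N s. c I * Dop N I p)"
    by (rule exI[of _ "\<lambda>I. a I + b I"]) (simp add: a b polys_add distrib_right sum.distrib)
qed

lemma isD_diff: "isD N s T \<Longrightarrow> isD N s U \<Longrightarrow> isD N s (\<lambda>q. T q - U q)"
  unfolding isD_def diffop_def
proof (elim exE conjE)
  fix a b assume a: "\<forall>I. a I \<in> polys N" "T = (\<lambda>p. \<Sum>I\<in>MI N s. a I * Dop N I p)"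
    and b: "\<forall>I. b I \<in> polys N" "U = (\<lambda>p. \<Sum>I\<in>MI N s. b I * Dop N I p)"
  show "\<exists>c. (\<forall>I. c I \<in> polys N) \<and> (\<lambda>q. T q - U q) = (\<lambda>p. \<Sum>I\<in>MI N s. c I * Dop N I p)"
    by (rule exI[of _ "\<lambda>I. a I - b I"]) (simp add: a b polys_diff left_diff_distrib sum_subtractf)
qed

lemma isD_lmult: "isD N s T \<Longrightarrow> f \<in> polys N \<Longrightarrow> isD N s (\<lambda>q. f * T q)"
  unfolding isD_def diffop_def
proof (elim exE conjE)
  fix a assume a: "\<forall>I. a I \<in> polys N" "T = (\<lambda>p. \<Sum>I\<in>MI N s. a I * Dop N I p)" and f: "f \<in> polys N"
  show "\<exists>c. (\<forall>I. c I \<in> polys N) \<and> (\<lambda>q. f * T q) = (\<lambda>p. \<Sum>I\<in>MI N s. c I * Dop N I p)"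
    by (rule exI[of _ "\<lambda>I. f * a I"]) (simp add: a f polys_mult sum_distrib_left mult.assoc)
qed

lemma isD_zero: "isD N s (\<lambda>q. 0)"
  unfolding isD_def diffop_def by (rule exI[of _ "\<lambda>I. 0"]) (simp add: polys_0)

lemma isD_sum: "(\<And>x. x \<in> A \<Longrightarrow> isD N s (T x)) \<Longrightarrow> isD N s (\<lambda>q. \<Sum>x\<in>A. T x q)"
proof (induction A rule: infinite_finite_induct)
  case (insert x F)
  then have "isD N s (\<lambda>q. T x q + (\<Sum>x\<in>F. T x q))" by (intro isD_add) auto
  then show ?case using insert.hyps by simp
qed (simp_all add: isD_zero)

lemma MI_mono: "s \<le> t \<Longrightarrow> MI N s \<subseteq> MI N t" by (auto simp: MI_def)

lemma isD_mono:
  assumes "isD N s T" "s \<le> t" shows "isD N t T"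
proof -
  obtain a where a: "\<forall>I. a I \<in> polys N" "T = (\<lambda>q. \<Sum>I\<in>MI N s. a I * Dop N I q)"
    using assms(1) by (auto simp: isD_def diffop_def[abs_def])
  have "isD N t (\<lambda>q. \<Sum>I\<in>MI N s. a I * Dop N I q)"
    using a(1) MI_mono[OF assms(2)] by (intro isD_sum isD_Dop) auto
  then show ?thesis using a(2) by simp
qed

lemma euler_mult:
  "euler N (f * g) = euler N f * g + (\<Sum>i<N. (xmon (Poly_Mapping.single i 1) * f) * pd i g)"
  by (simp add: euler_def pd_mult distrib_left sum.distrib sum_distrib_right mult.assoc)

lemma MI_Suc:
  assumes "I \<in> MI N s" "i < N"
  shows "I + Poly_Mapping.single i 1 \<in> MI N (Suc s)"
proof -
  have k: "ks (I + Poly_Mapping.single i 1) \<subseteq> {..<N}"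
    using assms keys_add[of I "Poly_Mapping.single i 1"] by (auto simp: MI_def)
  have "mdeg (I + Poly_Mapping.single i 1) = mdeg I + 1"
  proof -
    have kI: "ks I \<subseteq> {..<N}" using assms by (simp add: MI_def)
    show ?thesis
      using mdeg_degN[OF kI] mdeg_degN[OF k] degN_single[OF assms(2), of 1] degN_add[of N I] by simp
  qed
  then show ?thesis using k assms by (simp add: MI_def)
qed

lemma isD_euler:
  assumes "isD N s T" shows "isD N (Suc s) (\<lambda>q. euler N (T q))"
proof -
  obtain a where a: "\<forall>I. a I \<in> polys N" "T = (\<lambda>q. \<Sum>I\<in>MI N s. a I * Dop N I q)"
    using assms(1) by (auto simp: isD_def diffop_def[abs_def])
  have e: "euler N (T q) = (\<Sum>I\<in>MI N s. euler N (a I) * Dop N I q +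
      (\<Sum>i<N. (xmon (Poly_Mapping.single i 1) * a I) * Dop N (I + Poly_Mapping.single i 1) q))" for q
  proof -
    have "euler N (T q) = (\<Sum>I\<in>MI N s. euler N (a I * Dop N I q))"
      by (simp add: a(2) plin_sum[OF plin_euler])
    also have "\<dots> = (\<Sum>I\<in>MI N s. euler N (a I) * Dop N I q +
      (\<Sum>i<N. (xmon (Poly_Mapping.single i 1) * a I) * Dop N (I + Poly_Mapping.single i 1) q))"
      by (intro sum.cong refl) (simp add: euler_mult pd_Dop MI_def)
    finally show ?thesis .
  qed
  have "isD N (Suc s) (\<lambda>q. \<Sum>I\<in>MI N s. euler N (a I) * Dop N I q +
      (\<Sum>i<N. (xmon (Poly_Mapping.single i 1) * a I) * Dop N (I + Poly_Mapping.single i 1) q))"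
    using a(1) MI_mono[of s "Suc s" N]
    by (intro isD_sum isD_add isD_Dop polys_euler polys_mult polys_xmon MI_Suc) auto
  then show ?thesis by (simp add: e)
qed

lemma isD_pochE:
  assumes "ks J \<subseteq> {..<N}"
  shows "isD N (mdeg J + k) (\<lambda>q. pochE N a k (Dop N J q))"
proof (induction k)
  case 0
  have "isD N (mdeg J) (\<lambda>q. 1 * Dop N J q)"
    using assms by (intro isD_Dop polys_1) (simp add: MI_def)
  then show ?case by simp
next
  case (Suc k)
  have "isD N (mdeg J + Suc k) (\<lambda>q. cpoly (a - real k) * pochE N a k (Dop N J q) - euler N (pochE N a k (Dop N J q)))"
    by (intro isD_diff isD_mono[OF isD_lmult[OF Suc polys_cpoly]])
       (use isD_euler[OF Suc] in auto)
  then show ?case by simp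
qed

lemma isD_Kop: "J \<in> MI N r \<Longrightarrow> isD N r (Kop N n r J)"
proof -
  assume J: "J \<in> MI N r"
  then have "isD N (mdeg J + (r - mdeg J)) (\<lambda>q. pochE N (real n - real (mdeg J)) (r - mdeg J) (Dop N J q))"
    by (intro isD_pochE) (simp add: MI_def)
  then show ?thesis using J by (simp add: MI_def Kop_def[abs_def])
qed

lemma isD_S: "(\<And>J. J \<in> MI N r \<Longrightarrow> p J \<in> polys N) \<Longrightarrow> isD N r (\<lambda>q. \<Sum>J\<in>MI N r. p J * Kop N n r J q)"
  by (intro isD_sum isD_lmult isD_Kop) auto



lemma prod_nz_iff:
  "(\<Prod>j<a. real n - real d - real j) \<noteq> 0 \<longleftrightarrow> \<not> (d \<le> n \<and> n - d < a)"
proof -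
  have "(\<Prod>j<a. real n - real d - real j) = 0 \<longleftrightarrow> (\<exists>j<a. real n - real d - real j = 0)"
    by (auto simp: prod_zero_iff)
  also have "\<dots> \<longleftrightarrow> (\<exists>j<a. n = d + j)"
    by (intro ex_cong1) (auto simp: of_nat_eq_iff[symmetric])
  also have "\<dots> \<longleftrightarrow> d \<le> n \<and> n - d < a"
    by (auto intro!: exI[of _ "n - d"])
  finally show ?thesis by simp
qed

lemma ffN_nz_mle:
  assumes "ks J \<subseteq> {..<N}" "ffN N K J \<noteq> 0"
  shows "mle J K"
  unfolding mle_def
proof
  fix i
  show "lk J i \<le> lk K i"
  proof (cases "i < N")
    case True then show ?thesis using ffN_zero[of i N K J] assms(2) by force
  next
    case False then have "i \<notin> ks J" using assms(1) by auto
    then show ?thesis by (simp add: in_keys_iff)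
  qed
qed

lemma ffN_nz: "mle J K \<Longrightarrow> ffN N K J \<noteq> 0"
  unfolding ffN_def mle_def by (auto simp: ff_nz prod_zero_iff)

lemma kc_nz_mle: "ks J \<subseteq> {..<N} \<Longrightarrow> kc N n r K J \<noteq> 0 \<Longrightarrow> mle J K"
  unfolding kc_def using ffN_nz_mle by force

lemma degN_mono: "mle J K \<Longrightarrow> degN N J \<le> degN N K"
  unfolding degN_def mle_def by (intro sum_mono) auto

lemma kc_simp:
  assumes "ks J \<subseteq> {..<N}" "mle J K"
  shows "kc N n r K J = ffN N K J * (\<Prod>j<r - degN N J. real n - real (degN N K) - real j)"
proof -
  have "degN N (K - J) = degN N K - degN N J" by (rule degN_diff[OF assms(2)])
  moreover have "degN N J \<le> degN N K" by (rule degN_mono[OF assms(2)])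
  ultimately show ?thesis
    unfolding kc_def mdeg_degN[OF assms(1)] by (simp add: of_nat_diff algebra_simps)
qed

lemma kc_nz_iff:
  assumes "ks J \<subseteq> {..<N}"
  shows "kc N n r K J \<noteq> 0 \<longleftrightarrow> mle J K \<and> \<not> (degN N K \<le> n \<and> n - degN N K < r - degN N J)"
  using kc_nz_mle[OF assms] kc_simp[OF assms] ffN_nz prod_nz_iff by fastforce

lemma mle_refl: "mle K K" by (simp add: mle_def)

lemma mle_less:
  assumes "ks J \<subseteq> {..<N}" "ks K \<subseteq> {..<N}" "mle J K" "J \<noteq> K"
  shows "degN N J < degN N K"
proof -
  have "\<exists>i. lk J i \<noteq> lk K i"
  proof (rule ccontr)
    assume "\<not> (\<exists>i. lk J i \<noteq> lk K i)"
    then have "J = K" by (intro poly_mapping_eqI) simp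
    then show False using assms(4) by simp
  qed
  then obtain i where i: "lk J i \<noteq> lk K i" by blast
  then have "i \<in> ks J \<or> i \<in> ks K" by (auto simp: in_keys_iff)
  then have iN: "i < N" using assms(1,2) by auto
  have le: "\<forall>x\<in>{..<N}. lk J x \<le> lk K x" using assms(3) by (simp add: mle_def)
  have lt: "lk J i < lk K i" using i assms(3) by (simp add: mle_def le_neq_implies_less)
  have "(\<Sum>i<N. lk J i) < (\<Sum>i<N. lk K i)"
    by (rule sum_strict_mono_ex1[OF finite_lessThan le]) (use iN lt in blast)
  then show ?thesis by (simp add: degN_def)
qed

lemma MI_keys: "J \<in> MI N r \<Longrightarrow> ks J \<subseteq> {..<N}" by (simp add: MI_def)
lemma MI_deg: "J \<in> MI N r \<Longrightarrow> degN N J \<le> r" using mdeg_degN[of J N] by (simp add: MI_def)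
lemma MI_iff: "J \<in> MI N r \<longleftrightarrow> ks J \<subseteq> {..<N} \<and> degN N J \<le> r" using mdeg_degN[of J N] by (auto simp: MI_def)

lemma kc_diag:
  assumes "J \<in> MI N r" "r \<le> n"
  shows "kc N n r J J \<noteq> 0"
  using assms MI_deg[OF assms(1)] by (subst kc_nz_iff[OF MI_keys[OF assms(1)]]) (auto simp: mle_refl)

lemma triangular:
  fixes c :: "mindex \<Rightarrow> mindex \<Rightarrow> real" and d :: "mindex \<Rightarrow> mpoly"
  assumes c1: "\<And>K J. K \<in> MI N s \<Longrightarrow> J \<in> MI N s \<Longrightarrow> c K J \<noteq> 0 \<Longrightarrow> mle J K"
    and c2: "\<And>K. K \<in> MI N s \<Longrightarrow> c K K \<noteq> 0"
    and z: "\<And>K. K \<in> MI N s \<Longrightarrow> (\<Sum>J\<in>MI N s. d J * (cpoly (c K J) * xmon (K - J))) = 0"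
  shows "K \<in> MI N s \<Longrightarrow> d K = 0"
proof (induction "degN N K" arbitrary: K rule: less_induct)
  case less
  have others: "d J * (cpoly (c K J) * xmon (K - J)) = 0" if "J \<in> MI N s" "J \<noteq> K" for J
  proof (cases "c K J = 0")
    case False
    then have "mle J K" using c1 less.prems that by blast
    then have "degN N J < degN N K" using mle_less MI_keys that less.prems by blast
    then have "d J = 0" using less.hyps that by blast
    then show ?thesis by simp
  qed simp
  have "(\<Sum>J\<in>MI N s. d J * (cpoly (c K J) * xmon (K - J))) = d K * (cpoly (c K K) * xmon (K - K)) +
     (\<Sum>J\<in>MI N s - {K}. d J * (cpoly (c K J) * xmon (K - J)))"
    by (rule sum.remove[OF finite_MI less.prems])
  also have "(\<Sum>J\<in>MI N s - {K}. d J * (cpoly (c K J) * xmon (K - J))) = 0"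
    by (rule sum.neutral) (use others in blast)
  finally have "(\<Sum>J\<in>MI N s. d J * (cpoly (c K J) * xmon (K - J))) = d K * (cpoly (c K K) * xmon (K - K))"
    by simp
  then have "cpoly (c K K) * d K = 0" using z[OF less.prems] by (simp add: mult.commute)
  then have "c K K * lk (d K) X = 0" for X by (metis lookup_cpoly_mult lookup_zero)
  then show "d K = 0" using c2[OF less.prems] by (intro poly_mapping_eqI) simp
qed



definition Sop :: "nat \<Rightarrow> nat \<Rightarrow> nat \<Rightarrow> (mindex \<Rightarrow> mpoly) \<Rightarrow> mpoly \<Rightarrow> mpoly" where
  "Sop N n r p = (\<lambda>q. \<Sum>J\<in>MI N r. p J * Kop N n r J q)"

lemma S_xmon: "Sop N n r p (xmon K) = (\<Sum>J\<in>MI N r. p J * (cpoly (kc N n r K J) * xmon (K - J)))"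
  unfolding Sop_def by (intro sum.cong refl) (simp add: Kop_xmon MI_keys)

lemma plin_S: "plin (Sop N n r p)"
  unfolding Sop_def by (intro plin_sumf plin_lmult plin_Kop)

lemma S_unique:
  assumes "r \<le> n" "Sop N n r p = Sop N n r p'" "J \<in> MI N r"
  shows "p J = p' J"
proof -
  have "(\<lambda>J. p J - p' J) J = 0"
  proof (rule triangular[where c = "kc N n r", OF _ _ _ assms(3)])
    show "\<And>K J. K \<in> MI N r \<Longrightarrow> J \<in> MI N r \<Longrightarrow> kc N n r K J \<noteq> 0 \<Longrightarrow> mle J K"
      using kc_nz_mle MI_keys by blast
    show "\<And>K. K \<in> MI N r \<Longrightarrow> kc N n r K K \<noteq> 0" using kc_diag assms(1) by blast
    fix K assume "K \<in> MI N r"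
    have "(\<Sum>J\<in>MI N r. (p J - p' J) * (cpoly (kc N n r K J) * xmon (K - J)))
        = Sop N n r p (xmon K) - Sop N n r p' (xmon K)"
      by (simp add: S_xmon left_diff_distrib sum_subtractf)
    then show "(\<Sum>J\<in>MI N r. (p J - p' J) * (cpoly (kc N n r K J) * xmon (K - J))) = 0"
      using assms(2) by simp
  qed
  then show ?thesis by simp
qed

lemma diffop_xmon: "diffop N s a (xmon K) = (\<Sum>I\<in>MI N s. a I * (cpoly (ffN N K I) * xmon (K - I)))"
  unfolding diffop_def by (intro sum.cong refl) (simp add: Dop_xmon MI_keys)

lemma diffop_eq:
  assumes "\<And>K. K \<in> MI N s \<Longrightarrow> diffop N s a (xmon K) = diffop N s b (xmon K)"
  shows "diffop N s a = diffop N s b"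
proof -
  have ab: "a I = b I" if I: "I \<in> MI N s" for I
  proof -
    have "(\<lambda>J. a J - b J) I = 0"
    proof (rule triangular[where c = "ffN N", OF _ _ _ I])
      show "\<And>K J. K \<in> MI N s \<Longrightarrow> J \<in> MI N s \<Longrightarrow> ffN N K J \<noteq> 0 \<Longrightarrow> mle J K"
        using ffN_nz_mle MI_keys by blast
      show "\<And>K. K \<in> MI N s \<Longrightarrow> ffN N K K \<noteq> 0" using ffN_nz mle_refl by blast
      fix K assume "K \<in> MI N s"
      have "(\<Sum>J\<in>MI N s. (a J - b J) * (cpoly (ffN N K J) * xmon (K - J)))
          = diffop N s a (xmon K) - diffop N s b (xmon K)"
        by (simp add: diffop_xmon left_diff_distrib sum_subtractf)
      then show "(\<Sum>J\<in>MI N s. (a J - b J) * (cpoly (ffN N K J) * xmon (K - J))) = 0"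
        using assms[OF \<open>K \<in> MI N s\<close>] by simp
    qed
    then show ?thesis by simp
  qed
  show ?thesis unfolding diffop_def by (intro ext sum.cong refl) (simp add: ab)
qed

lemma isD_eq:
  assumes "isD N s T" "isD N s U" "\<And>K. K \<in> MI N s \<Longrightarrow> T (xmon K) = U (xmon K)"
  shows "T = U"
  using assms diffop_eq unfolding isD_def by metis

lemma polys_funpow: "(\<And>q. q \<in> polys N \<Longrightarrow> F q \<in> polys N) \<Longrightarrow> q \<in> polys N \<Longrightarrow> (F ^^ k) q \<in> polys N"
  by (induction k) auto

lemma polys_foldr: "(\<And>i q. q \<in> polys N \<Longrightarrow> F i q \<in> polys N) \<Longrightarrow> q \<in> polys N \<Longrightarrow> foldr F xs q \<in> polys N"
  by (induction xs) auto

lemma polys_Dop: "q \<in> polys N \<Longrightarrow> Dop N I q \<in> polys N"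
  unfolding Dop_def by (intro polys_foldr polys_funpow polys_pd)

lemma isD_polys: "isD N s T \<Longrightarrow> q \<in> polys N \<Longrightarrow> T q \<in> polys N"
  unfolding isD_def diffop_def by (auto intro!: polys_sum polys_mult polys_Dop)

lemma Pspace_iff: "p \<in> Pspace N s \<longleftrightarrow> (\<forall>K. lk p K \<noteq> 0 \<longrightarrow> ks K \<subseteq> {..<N} \<and> degN N K \<le> s)"
proof -
  have "p \<in> Pspace N s \<longleftrightarrow> (\<forall>K. lk p K \<noteq> 0 \<longrightarrow> ks K \<subseteq> {..<N} \<and> mdeg K \<le> s)"
    unfolding Pspace_def by (auto simp: in_keys_iff)
  also have "\<dots> \<longleftrightarrow> (\<forall>K. lk p K \<noteq> 0 \<longrightarrow> ks K \<subseteq> {..<N} \<and> degN N K \<le> s)"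
    using mdeg_degN[of _ N] by metis
  finally show ?thesis .
qed

lemma Pspace_0: "0 \<in> Pspace N s" by (simp add: Pspace_iff)

lemma Pspace_add: "p \<in> Pspace N s \<Longrightarrow> q \<in> Pspace N s \<Longrightarrow> p + q \<in> Pspace N s"
  unfolding Pspace_iff by (metis add.right_neutral lookup_add)

lemma Pspace_sum: "(\<And>x. x \<in> A \<Longrightarrow> f x \<in> Pspace N s) \<Longrightarrow> (\<Sum>x\<in>A. f x) \<in> Pspace N s"
  by (induction A rule: infinite_finite_induct) (auto simp: Pspace_0 Pspace_add)

lemma Pspace_cpoly: "p \<in> Pspace N s \<Longrightarrow> cpoly c * p \<in> Pspace N s"
  unfolding Pspace_iff by simp

lemma Pspace_mono: "p \<in> Pspace N s \<Longrightarrow> s \<le> t \<Longrightarrow> p \<in> Pspace N t"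
  unfolding Pspace_iff by force

lemma Pspace_polys: "p \<in> Pspace N s \<Longrightarrow> p \<in> polys N"
  unfolding Pspace_iff by (intro polysI) blast

lemma xmon_Pspace: "ks K \<subseteq> {..<N} \<Longrightarrow> degN N K \<le> s \<Longrightarrow> xmon K \<in> Pspace N s"
  unfolding Pspace_iff by (simp add: lookup_xmon)

lemma keys_mle_sub: "mle M X \<Longrightarrow> ks X \<subseteq> ks (X - M) \<union> ks M"
  by (auto simp: in_keys_iff lookup_minus mle_def)

lemma degN_mle: "mle M X \<Longrightarrow> degN N X = degN N (X - M) + degN N M"
  using degN_diff[of M X N] degN_mono[of M X N] by simp

lemma Pspace_mult_xmon:
  assumes "p \<in> Pspace N a" "ks M \<subseteq> {..<N}" "degN N M \<le> b"
  shows "p * xmon M \<in> Pspace N (a + b)"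
  unfolding Pspace_iff
proof (intro allI impI)
  fix X assume "lk (p * xmon M) X \<noteq> 0"
  then have X: "mle M X" "lk p (X - M) \<noteq> 0" by (auto simp: lookup_mult_xmon split: if_splits)
  then have "ks (X - M) \<subseteq> {..<N}" "degN N (X - M) \<le> a" using assms(1) by (auto simp: Pspace_iff)
  then show "ks X \<subseteq> {..<N} \<and> degN N X \<le> a + b"
    using keys_mle_sub[OF X(1)] degN_mle[OF X(1), of N] assms(2,3) by auto
qed

lemma S_maps:
  assumes "m \<le> r" "r \<le> n" "\<And>J. J \<in> MI N r \<Longrightarrow> p J \<in> Pspace N (r - m)" "q \<in> Pspace N n"
  shows "Sop N n r p q \<in> Pspace N (n - m)"
proof -
  have mon: "Sop N n r p (xmon K) \<in> Pspace N (n - m)" if K: "ks K \<subseteq> {..<N}" "degN N K \<le> n" for K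
    unfolding S_xmon
  proof (intro Pspace_sum)
    fix J assume J: "J \<in> MI N r"
    show "p J * (cpoly (kc N n r K J) * xmon (K - J)) \<in> Pspace N (n - m)"
    proof (cases "kc N n r K J = 0")
      case True then show ?thesis by (simp add: Pspace_0)
    next
      case False
      then have c: "mle J K" "\<not> (degN N K \<le> n \<and> n - degN N K < r - degN N J)"
        using kc_nz_iff[OF MI_keys[OF J]] by auto
      have dJ: "degN N J \<le> r" using MI_deg[OF J] .
      have "degN N (K - J) \<le> n - r" using c K dJ degN_diff[OF c(1), of N] degN_mono[OF c(1), of N] by linarith
      moreover have "ks (K - J) \<subseteq> {..<N}" using K keys_diff_sub by blast
      ultimately have "p J * xmon (K - J) \<in> Pspace N ((r - m) + (n - r))"
        by (intro Pspace_mult_xmon assms(3) J)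
      moreover have "(r - m) + (n - r) = n - m" using assms by simp
      ultimately have "cpoly (kc N n r K J) * (p J * xmon (K - J)) \<in> Pspace N (n - m)"
        by (simp add: Pspace_cpoly)
      then show ?thesis by (simp add: mult.left_commute)
    qed
  qed
  have "Sop N n r p q = (\<Sum>K\<in>ks q. cpoly (lk q K) * Sop N n r p (xmon K))"
    by (rule plin_expand[OF plin_S])
  also have "\<dots> \<in> Pspace N (n - m)"
    using assms(4) mon by (intro Pspace_sum Pspace_cpoly) (auto simp: Pspace_iff in_keys_iff)
  finally show ?thesis .
qed



lemma isD_Sop: "(\<And>J. J \<in> MI N r \<Longrightarrow> p J \<in> polys N) \<Longrightarrow> isD N r (Sop N n r p)"
  unfolding Sop_def by (rule isD_S)

lemma exists_rep:
  assumes rn: "r \<le> n" and L: "isD N r L"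
  shows "\<exists>p. (\<forall>J. p J \<in> polys N) \<and> (\<forall>J. J \<notin> MI N r \<longrightarrow> p J = 0) \<and> Sop N n r p = L"
proof -
  have "\<exists>p. (\<forall>J. p J \<in> polys N) \<and> (\<forall>J. (J \<notin> MI N r \<or> d \<le> degN N J) \<longrightarrow> p J = 0)
     \<and> (\<forall>K\<in>MI N r. degN N K < d \<longrightarrow> Sop N n r p (xmon K) = L (xmon K))" for d
  proof (induction d)
    case 0
    show ?case by (rule exI[of _ "\<lambda>J. 0"]) (simp add: polys_0)
  next
    case (Suc d)
    then obtain p where p1: "\<forall>J. p J \<in> polys N" and p2: "\<forall>J. (J \<notin> MI N r \<or> d \<le> degN N J) \<longrightarrow> p J = 0"
      and p3: "\<forall>K\<in>MI N r. degN N K < d \<longrightarrow> Sop N n r p (xmon K) = L (xmon K)" by blast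
    define p' where "p' J = (if J \<in> MI N r \<and> degN N J = d
        then cpoly (1 / kc N n r J J) * (L (xmon J) - Sop N n r p (xmon J)) else p J)" for J
    have q1: "\<forall>J. p' J \<in> polys N"
    proof
      fix J
      show "p' J \<in> polys N"
      proof (cases "J \<in> MI N r \<and> degN N J = d")
        case True
        have "xmon J \<in> polys N" using True by (intro polys_xmon MI_keys) auto
        then show ?thesis using True p1
          by (auto simp: p'_def intro!: polys_mult polys_cpoly polys_diff isD_polys[OF L] isD_polys[OF isD_Sop])
      next
        case False then have "p' J = p J" unfolding p'_def by meson
        then show ?thesis by (simp add: p1)
      qed
    qed
    have q2: "\<forall>J. (J \<notin> MI N r \<or> Suc d \<le> degN N J) \<longrightarrow> p' J = 0"
      using p2 by (auto simp: p'_def)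
    have q3: "Sop N n r p' (xmon K) = L (xmon K)" if K: "K \<in> MI N r" "degN N K < Suc d" for K
    proof -
      let ?t = "\<lambda>J. (p' J - p J) * (cpoly (kc N n r K J) * xmon (K - J))"
      have diff: "Sop N n r p' (xmon K) - Sop N n r p (xmon K) = (\<Sum>J\<in>MI N r. ?t J)"
        by (simp add: S_xmon left_diff_distrib sum_subtractf)
      have others: "?t J = 0" if J: "J \<in> MI N r" "J \<noteq> K" for J
      proof (cases "p' J = p J")
        case False
        then have dJ: "degN N J = d" by (auto simp: p'_def split: if_splits)
        show ?thesis
        proof (cases "kc N n r K J = 0")
          case False
          then have "mle J K" using kc_nz_mle[OF MI_keys[OF J(1)]] by blast
          then have "degN N J < degN N K" using mle_less[OF MI_keys[OF J(1)] MI_keys[OF K(1)]] J(2) by blast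
          then show ?thesis using dJ K(2) by simp
        qed simp
      qed simp
      have "(\<Sum>J\<in>MI N r. ?t J) = ?t K + (\<Sum>J\<in>MI N r - {K}. ?t J)"
        by (rule sum.remove[OF finite_MI K(1)])
      also have "(\<Sum>J\<in>MI N r - {K}. ?t J) = 0" by (rule sum.neutral) (use others in blast)
      finally have sumt: "(\<Sum>J\<in>MI N r. ?t J) = ?t K" by simp
      show ?thesis
      proof (cases "degN N K = d")
        case True
        have c: "kc N n r K K \<noteq> 0" by (rule kc_diag[OF K(1) rn])
        have "p K = 0" using p2 True by auto
        then have "?t K = cpoly (1 / kc N n r K K) * cpoly (kc N n r K K) * (L (xmon K) - Sop N n r p (xmon K))"
          using True K(1) by (simp add: p'_def mult_ac)
        also have "\<dots> = L (xmon K) - Sop N n r p (xmon K)"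
          using c by (simp add: cpoly_mult[symmetric])
        finally have tK: "?t K = L (xmon K) - Sop N n r p (xmon K)" .
        have "Sop N n r p' (xmon K) - Sop N n r p (xmon K) = L (xmon K) - Sop N n r p (xmon K)"
          by (simp only: diff sumt tK)
        then show ?thesis by (metis diff_add_cancel)
      next
        case False
        then have "?t K = 0" by (simp add: p'_def)
        then have "Sop N n r p' (xmon K) - Sop N n r p (xmon K) = 0" by (simp only: diff sumt)
        then show ?thesis using p3 K False by simp
      qed
    qed
    show ?case using q1 q2 q3 by blast
  qed
  from this[of "Suc r"] obtain p where p1: "\<forall>J. p J \<in> polys N" and p2: "\<forall>J. J \<notin> MI N r \<longrightarrow> p J = 0"
    and p3: "\<forall>K\<in>MI N r. Sop N n r p (xmon K) = L (xmon K)"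
    using MI_deg by (metis le_imp_less_Suc)
  have "Sop N n r p = L"
    by (rule isD_eq[OF isD_Sop L]) (use p1 p3 in auto)
  then show ?thesis using p1 p2 by blast
qed



lemma lk_le_degN: "i < N \<Longrightarrow> lk K i \<le> degN N K"
  unfolding degN_def by (rule member_le_sum) auto

lemma deg_bound:
  assumes N1: "1 \<le> N" and mr: "m \<le> r" and rn: "r \<le> n"
    and p1: "\<forall>J. p J \<in> polys N"
    and maps: "\<forall>q\<in>Pspace N n. Sop N n r p q \<in> Pspace N (n - m)"
  shows "J \<in> MI N r \<Longrightarrow> p J \<in> Pspace N (r - m)"
proof (induction J rule: measure_induct_rule[where f = "\<lambda>J. (r - degN N J) * (r + 1) + (degN N J - lk J 0)"])
  case (less J)
  have N0: "0 < N" using N1 by simp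
  have kJ: "ks J \<subseteq> {..<N}" and dJ: "degN N J \<le> r" using less.prems by (auto simp: MI_iff)
  define e where "e = Poly_Mapping.single (0::nat) (n - r)"
  have ke: "ks e \<subseteq> {..<N}" using N0 by (simp add: e_def)
  have de: "degN N e = n - r" using degN_single[OF N0] by (simp add: e_def)
  define K where "K = J + e"
  have kK: "ks K \<subseteq> {..<N}" using kJ ke keys_add[of J e] by (auto simp: K_def)
  have dK: "degN N K = degN N J + (n - r)" by (simp add: K_def degN_add de)
  have KJ: "K - J = e" by (simp add: K_def)
  have mJK: "mle J K" by (simp add: K_def mle_def lookup_add)
  have xK: "xmon K \<in> Pspace N n" using kK dK dJ rn by (intro xmon_Pspace) auto
  then have SK: "Sop N n r p (xmon K) \<in> Pspace N (n - m)" using maps by blast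
  show "p J \<in> Pspace N (r - m)"
    unfolding Pspace_iff
  proof (intro allI impI)
    fix M assume M: "lk (p J) M \<noteq> 0"
    have kM: "ks M \<subseteq> {..<N}" using p1 polysD M by blast
    show "ks M \<subseteq> {..<N} \<and> degN N M \<le> r - m"
    proof (rule ccontr)
      assume "\<not> (ks M \<subseteq> {..<N} \<and> degN N M \<le> r - m)"
      then have dM: "r - m < degN N M" using kM by auto
      define X where "X = M + e"
      have kX: "ks X \<subseteq> {..<N}" using kM ke keys_add[of M e] by (auto simp: X_def)
      have dX: "degN N X = degN N M + (n - r)" by (simp add: X_def degN_add de)
      have z0: "lk (Sop N n r p (xmon K)) X = 0"
      proof (rule ccontr)
        assume "lk (Sop N n r p (xmon K)) X \<noteq> 0"
        then have "degN N X \<le> n - m" using SK by (auto simp: Pspace_iff)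
        then show False using dX dM mr rn by linarith
      qed
      let ?u = "\<lambda>J'. kc N n r K J' * lk (p J' * xmon (K - J')) X"
      have expand: "lk (Sop N n r p (xmon K)) X = (\<Sum>J'\<in>MI N r. ?u J')"
        unfolding S_xmon lookup_sum
      proof (rule sum.cong[OF refl])
        fix J' show "lk (p J' * (cpoly (kc N n r K J') * xmon (K - J'))) X = ?u J'"
          by (subst mult.left_commute) (rule lookup_cpoly_mult)
      qed
      have others: "?u J' = 0" if J': "J' \<in> MI N r" "J' \<noteq> J" for J'
      proof (rule ccontr)
        assume u: "?u J' \<noteq> 0"
        then have c: "kc N n r K J' \<noteq> 0" and l: "lk (p J' * xmon (K - J')) X \<noteq> 0" by auto
        from l have mX: "mle (K - J') X" and l2: "lk (p J') (X - (K - J')) \<noteq> 0"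
          by (auto simp: lookup_mult_xmon split: if_splits)
        have kJ': "ks J' \<subseteq> {..<N}" and dJ': "degN N J' \<le> r" using J'(1) by (auto simp: MI_iff)
        from c have mJ'K: "mle J' K" and nl: "\<not> (degN N K \<le> n \<and> n - degN N K < r - degN N J')"
          using kc_nz_iff[OF kJ'] by auto
        have ge: "degN N J \<le> degN N J'" using nl dK dJ rn dJ' by auto
        have mu: "(r - degN N J') * (r + 1) + (degN N J' - lk J' 0) < (r - degN N J) * (r + 1) + (degN N J - lk J 0)"
        proof (cases "degN N J < degN N J'")
          case True
          then have "(r - degN N J') + 1 \<le> r - degN N J" using dJ' by linarith
          then have "((r - degN N J') + 1) * (r + 1) \<le> (r - degN N J) * (r + 1)" by (rule mult_le_mono1)
          moreover have "degN N J' - lk J' 0 \<le> r" using dJ' by linarith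
          ultimately show ?thesis by (simp add: algebra_simps)
        next
          case False
          then have eqd: "degN N J' = degN N J" using ge by simp
          have "lk J 0 < lk J' 0"
          proof (rule ccontr)
            assume "\<not> lk J 0 < lk J' 0"
            then have "mle J' J"
              unfolding mle_def
            proof (intro allI)
              fix i
              assume a: "\<not> lk J 0 < lk J' 0"
              show "lk J' i \<le> lk J i"
              proof (cases "i = 0")
                case True then show ?thesis using a by simp
              next
                case False
                have "lk J' i \<le> lk K i" using mJ'K by (simp add: mle_def)
                also have "lk K i = lk J i" using False by (simp add: K_def e_def lookup_add lookup_single)
                finally show ?thesis .
              qed
            qed
            then have "degN N J' < degN N J" using mle_less[OF kJ' kJ] J'(2) by blast
            then show False using eqd by simp
          qed
          moreover have "lk J' 0 \<le> degN N J'" by (rule lk_le_degN[OF N0])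
          ultimately show ?thesis using eqd unfolding eqd by linarith
        qed
        have "p J' \<in> Pspace N (r - m)" using less.IH[OF mu J'(1)] .
        then have "degN N (X - (K - J')) \<le> r - m" using l2 by (auto simp: Pspace_iff)
        moreover have "degN N (X - (K - J')) = degN N X - degN N (K - J')" by (rule degN_diff[OF mX])
        moreover have "degN N (K - J') = degN N K - degN N J'" by (rule degN_diff[OF mJ'K])
        moreover have "degN N J' \<le> degN N K" by (rule degN_mono[OF mJ'K])
        ultimately show False using dX dK dM ge dJ' by linarith
      qed
      have uJ: "?u J = kc N n r K J * lk (p J) M"
      proof -
        have "mle e X" by (simp add: X_def mle_def lookup_add)
        moreover have "X - e = M" by (simp add: X_def)
        ultimately show ?thesis by (simp add: KJ lookup_mult_xmon)
      qed
      have cJ: "kc N n r K J \<noteq> 0"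
        using kc_nz_iff[OF kJ, of n r K] mJK dK dJ rn by auto
      have "(\<Sum>J'\<in>MI N r. ?u J') = ?u J + (\<Sum>J'\<in>MI N r - {J}. ?u J')"
        by (rule sum.remove[OF finite_MI less.prems])
      also have "(\<Sum>J'\<in>MI N r - {J}. ?u J') = 0" by (rule sum.neutral) (use others in blast)
      finally have "lk (Sop N n r p (xmon K)) X = kc N n r K J * lk (p J) M" using expand uJ by simp
      then show False using z0 cJ M by simp
    qed
  qed
qed



lemma card_lists_le:
  assumes "1 \<le> N"
  shows "card {l::nat list. length l = N \<and> sum_list l \<le> s} = (N + s) choose s"
proof -
  have eq: "{l::nat list. length l = N \<and> sum_list l \<le> s} = (\<Union>k\<in>{..s}. {l. length l = N \<and> sum_list l = k})"
    by auto
  have fin: "finite {l::nat list. length l = N \<and> sum_list l = k}" for k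
  proof (rule finite_subset)
    show "{l::nat list. length l = N \<and> sum_list l = k} \<subseteq> {l. set l \<subseteq> {..k} \<and> length l = N}"
      using member_le_sum_list by fastforce
    show "finite {l. set l \<subseteq> {..k} \<and> length l = N}" by (rule finite_lists_length_eq) auto
  qed
  have "card {l::nat list. length l = N \<and> sum_list l \<le> s} = (\<Sum>k\<le>s. card {l::nat list. length l = N \<and> sum_list l = k})"
    unfolding eq by (rule card_UN_disjoint) (use fin in auto)
  also have "\<dots> = (\<Sum>k\<le>s. ((N - 1) + k) choose k)"
    using assms by (intro sum.cong refl) (simp add: card_length_sum_list add.commute)
  also have "\<dots> = Suc (N - 1 + s) choose s" by (rule sum_choose_lower)
  also have "Suc (N - 1 + s) = N + s" using assms by simp
  finally show ?thesis .
qed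

lemma card_MI:
  assumes "1 \<le> N"
  shows "card (MI N s) = (N + s) choose s"
proof -
  let ?f = "\<lambda>I. map (lk I) [0..<N]"
  have inj: "inj_on ?f (MI N s)"
  proof (rule inj_onI)
    fix I J assume IJ: "I \<in> MI N s" "J \<in> MI N s" and eq: "?f I = ?f J"
    show "I = J"
    proof (rule poly_mapping_eqI)
      fix k
      show "lk I k = lk J k"
      proof (cases "k < N")
        case True
        have "?f I ! k = ?f J ! k" by (simp only: eq)
        then show ?thesis using True by simp
      next
        case False
        then have "k \<notin> ks I" "k \<notin> ks J" using IJ by (auto simp: MI_def)
        then show ?thesis by (simp add: in_keys_iff)
      qed
    qed
  qed
  have sl: "sum_list (?f I) = degN N I" for I
    by (simp add: degN_def sum_set_upt_conv_sum_list_nat[symmetric] atLeast0LessThan)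
  have img: "?f ` MI N s = {l. length l = N \<and> sum_list l \<le> s}"
  proof
    show "?f ` MI N s \<subseteq> {l. length l = N \<and> sum_list l \<le> s}"
      using sl MI_deg by auto
  next
    show "{l. length l = N \<and> sum_list l \<le> s} \<subseteq> ?f ` MI N s"
    proof
      fix l :: "nat list" assume l: "l \<in> {l. length l = N \<and> sum_list l \<le> s}"
      let ?I = "Poly_Mapping.nth l"
      have lk: "lk ?I i = (if i < N then l ! i else 0)" for i
        using l by (simp add: nth_default_nth nth_default_beyond)
      have fI: "?f ?I = l" using l by (intro nth_equalityI) (auto simp: nth_default_nth)
      have kI: "ks ?I \<subseteq> {..<N}"
      proof
        fix i assume "i \<in> ks ?I"
        then have "lk ?I i \<noteq> 0" by (metis in_keys_iff)
        then show "i \<in> {..<N}" unfolding lk by (auto split: if_splits)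
      qed
      have "degN N ?I \<le> s" using sl[of ?I] fI l by simp
      then have "?I \<in> MI N s" using kI by (simp add: MI_iff)
      then show "l \<in> ?f ` MI N s" using fI by (metis image_eqI)
    qed
  qed
  have "card (MI N s) = card (?f ` MI N s)" by (rule card_image[OF inj, symmetric])
  also have "\<dots> = (N + s) choose s" unfolding img by (rule card_lists_le[OF assms])
  finally show ?thesis .
qed



lemma fun_sum_apply: "(\<Sum>x\<in>A. f x) q = (\<Sum>x\<in>A. (f x :: mpoly \<Rightarrow> mpoly) q)"
  by (induction A rule: infinite_finite_induct) auto

lemma vs_op_scale: "vector_space op_scale"
  by unfold_locales (auto simp: op_scale_def fun_eq_iff cpoly_add cpoly_mult distrib_left distrib_right mult.assoc)

definition gop :: "nat \<Rightarrow> nat \<Rightarrow> nat \<Rightarrow> mindex \<times> mindex \<Rightarrow> mpoly \<Rightarrow> mpoly" where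
  "gop N n r x = Sop N n r (\<lambda>J'. if J' = fst x then xmon (snd x) else 0)"

lemma gop_apply: "J \<in> MI N r \<Longrightarrow> gop N n r (J, M) q = xmon M * Kop N n r J q"
proof -
  assume J: "J \<in> MI N r"
  have "gop N n r (J, M) q = (\<Sum>J'\<in>MI N r. if J' = J then xmon M * Kop N n r J q else 0)"
    unfolding gop_def Sop_def by (intro sum.cong refl) auto
  also have "\<dots> = xmon M * Kop N n r J q" using J finite_MI by simp
  finally show ?thesis .
qed

lemma comb:
  "(\<Sum>x\<in>MI N r \<times> MI N t. op_scale (c x) (gop N n r x)) = Sop N n r (\<lambda>J. \<Sum>M\<in>MI N t. cpoly (c (J, M)) * xmon M)"
proof
  fix q
  have "(\<Sum>x\<in>MI N r \<times> MI N t. op_scale (c x) (gop N n r x)) q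
      = (\<Sum>x\<in>MI N r \<times> MI N t. cpoly (c x) * gop N n r x q)"
    by (simp add: fun_sum_apply op_scale_def)
  also have "\<dots> = (\<Sum>J\<in>MI N r. \<Sum>M\<in>MI N t. cpoly (c (J, M)) * gop N n r (J, M) q)"
    by (simp add: sum.cartesian_product)
  also have "\<dots> = (\<Sum>J\<in>MI N r. \<Sum>M\<in>MI N t. cpoly (c (J, M)) * xmon M * Kop N n r J q)"
    by (intro sum.cong refl) (simp add: gop_apply mult.assoc)
  also have "\<dots> = Sop N n r (\<lambda>J. \<Sum>M\<in>MI N t. cpoly (c (J, M)) * xmon M) q"
    by (simp add: Sop_def sum_distrib_right)
  finally show "(\<Sum>x\<in>MI N r \<times> MI N t. op_scale (c x) (gop N n r x)) q = Sop N n r (\<lambda>J. \<Sum>M\<in>MI N t. cpoly (c (J, M)) * xmon M) q" .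
qed

lemma lookup_monsum:
  assumes "M \<in> A" "finite A"
  shows "lk (\<Sum>M'\<in>A. cpoly (c M') * xmon M') M = c M"
proof -
  have "lk (\<Sum>M'\<in>A. cpoly (c M') * xmon M') M = (\<Sum>M'\<in>A. if M = M' then c M' else 0)"
    by (simp add: lookup_sum lookup_xmon)
  also have "\<dots> = c M" using assms by simp
  finally show ?thesis .
qed

theorem mainTheorem19:
  fixes N n r m :: nat
  assumes "N \<ge> 1" and "m \<le> r" and "r \<le> n"
  shows "(\<forall>L\<in>Lspace N n r m. \<exists>!p. (\<forall>J. p J \<in> (if J \<in> MI N r then Pspace N (r - m) else {0}))
             \<and> L = (\<lambda>q. \<Sum>J\<in>MI N r. p J * Kop N n r J q))
       \<and> (\<forall>p. (\<forall>J\<in>MI N r. p J \<in> Pspace N (r - m))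
             \<longrightarrow> (\<lambda>q. \<Sum>J\<in>MI N r. p J * Kop N n r J q) \<in> Lspace N n r m)
       \<and> vector_space.dim op_scale (Lspace N n r m)
           = ((N + r - m) choose (r - m)) * ((N + r) choose r)"
proof -
  note N1 = assms(1) and mr = assms(2) and rn = assms(3)
  define F where "F = {p. \<forall>J. p J \<in> (if J \<in> MI N r then Pspace N (r - m) else {0})}"
  have L_isD: "isD N r L" if "L \<in> Lspace N n r m" for L
    using that by (simp add: Lspace_def isD_def)
  have L_maps: "\<forall>q\<in>Pspace N n. L q \<in> Pspace N (n - m)" if "L \<in> Lspace N n r m" for L
    using that by (simp add: Lspace_def)
  have part2: "Sop N n r p \<in> Lspace N n r m" if p: "\<forall>J\<in>MI N r. p J \<in> Pspace N (r - m)" for p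
  proof -
    have "isD N r (Sop N n r p)" using p by (intro isD_Sop) (auto intro: Pspace_polys)
    moreover have "\<forall>q\<in>Pspace N n. Sop N n r p q \<in> Pspace N (n - m)"
      using p by (auto intro: S_maps[OF mr rn])
    ultimately show ?thesis by (simp add: Lspace_def isD_def)
  qed
  have exist: "\<exists>p. p \<in> F \<and> L = Sop N n r p" if L: "L \<in> Lspace N n r m" for L
  proof -
    obtain p where p1: "\<forall>J. p J \<in> polys N" and p2: "\<forall>J. J \<notin> MI N r \<longrightarrow> p J = 0"
      and p3: "Sop N n r p = L"
      using exists_rep[OF rn L_isD[OF L]] by blast
    have "p J \<in> Pspace N (r - m)" if "J \<in> MI N r" for J
      by (rule deg_bound[OF N1 mr rn p1]) (use L_maps[OF L] p3 that in auto)
    then have "p \<in> F" using p2 by (auto simp: F_def)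
    then show ?thesis using p3 by blast
  qed
  have uniq: "p = p'" if "p \<in> F" "p' \<in> F" "Sop N n r p = Sop N n r p'" for p p'
  proof
    fix J show "p J = p' J"
    proof (cases "J \<in> MI N r")
      case True then show ?thesis using S_unique[OF rn that(3)] by blast
    next
      case False
      have "p J \<in> (if J \<in> MI N r then Pspace N (r - m) else {0})" "p' J \<in> (if J \<in> MI N r then Pspace N (r - m) else {0})"
        using that(1,2) by (auto simp: F_def)
      then show ?thesis using False by simp
    qed
  qed
  have P1: "\<forall>L\<in>Lspace N n r m. \<exists>!p. (\<forall>J. p J \<in> (if J \<in> MI N r then Pspace N (r - m) else {0}))
             \<and> L = (\<lambda>q. \<Sum>J\<in>MI N r. p J * Kop N n r J q)"
  proof
    fix L assume L: "L \<in> Lspace N n r m"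
    show "\<exists>!p. (\<forall>J. p J \<in> (if J \<in> MI N r then Pspace N (r - m) else {0}))
             \<and> L = (\<lambda>q. \<Sum>J\<in>MI N r. p J * Kop N n r J q)"
    proof -
      obtain p where p: "p \<in> F" "L = Sop N n r p" using exist[OF L] by blast
      show ?thesis
      proof (rule ex1I[of _ p])
        show "(\<forall>J. p J \<in> (if J \<in> MI N r then Pspace N (r - m) else {0}))
             \<and> L = (\<lambda>q. \<Sum>J\<in>MI N r. p J * Kop N n r J q)"
          using p by (simp add: F_def Sop_def)
        fix y assume y: "(\<forall>J. y J \<in> (if J \<in> MI N r then Pspace N (r - m) else {0}))
             \<and> L = (\<lambda>q. \<Sum>J\<in>MI N r. y J * Kop N n r J q)"
        then have "y \<in> F" "Sop N n r y = Sop N n r p" using p(2) by (auto simp: F_def Sop_def)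
        then show "y = p" using uniq p(1) by blast
      qed
    qed
  qed
  have P2: "\<forall>p. (\<forall>J\<in>MI N r. p J \<in> Pspace N (r - m))
             \<longrightarrow> (\<lambda>q. \<Sum>J\<in>MI N r. p J * Kop N n r J q) \<in> Lspace N n r m"
    using part2 unfolding Sop_def by blast
  interpret vs: vector_space op_scale by (rule vs_op_scale)
  let ?A = "MI N r \<times> MI N (r - m)"
  let ?g = "gop N n r"
  let ?B = "?g ` ?A"
  have finA: "finite ?A" using finite_MI by simp
  have inj: "inj_on ?g ?A"
  proof (rule inj_onI)
    fix x y assume x: "x \<in> ?A" and y: "y \<in> ?A" and eq: "?g x = ?g y"
    obtain J M where xJM: "x = (J, M)" by (cases x)
    obtain J' M' where yJM: "y = (J', M')" by (cases y)
    have J: "J \<in> MI N r" using x xJM by simp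
    have "(\<lambda>J''. if J'' = J then xmon M else 0) J = (\<lambda>J''. if J'' = J' then xmon M' else 0) J"
      by (rule S_unique[OF rn _ J, where p = "\<lambda>J''. if J'' = J then xmon M else 0" and p' = "\<lambda>J''. if J'' = J' then xmon M' else 0"])
         (use eq in \<open>simp only: gop_def xJM yJM fst_conv snd_conv\<close>)
    then have "xmon M = (if J = J' then xmon M' else 0)" by simp
    then have "J = J'" "xmon M = xmon M'" by (auto split: if_splits)
    moreover then have "M = M'" by (metis xmon_def lookup_single_eq lookup_xmon one_neq_zero)
    ultimately show "x = y" using xJM yJM by simp
  qed
  have BL: "?B \<subseteq> Lspace N n r m"
  proof
    fix b assume "b \<in> ?B"
    then obtain J M where JM: "J \<in> MI N r" "M \<in> MI N (r - m)" "b = ?g (J, M)" by auto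
    have "\<forall>J'\<in>MI N r. (\<lambda>J'. if J' = J then xmon M else 0) J' \<in> Pspace N (r - m)"
      using JM(2) by (auto simp: Pspace_0 MI_iff intro!: xmon_Pspace)
    moreover have "b = Sop N n r (\<lambda>J'. if J' = J then xmon M else 0)"
      using JM(3) by (simp only: gop_def fst_conv snd_conv)
    ultimately show "b \<in> Lspace N n r m" using part2[of "\<lambda>J'. if J' = J then xmon M else 0"] by simp
  qed
  have LB: "Lspace N n r m \<subseteq> vs.span ?B"
  proof
    fix L assume L: "L \<in> Lspace N n r m"
    obtain p where p: "p \<in> F" "L = Sop N n r p" using exist[OF L] by blast
    have pexp: "p J = (\<Sum>M\<in>MI N (r - m). cpoly (lk (p J) M) * xmon M)" if J: "J \<in> MI N r" for J
    proof (rule poly_expand[OF finite_MI])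
      have "\<forall>J. p J \<in> (if J \<in> MI N r then Pspace N (r - m) else {0})" using p(1) by (simp add: F_def)
      then have "p J \<in> Pspace N (r - m)" using J by (metis (full_types))
      then show "ks (p J) \<subseteq> MI N (r - m)" by (auto simp: Pspace_def MI_def)
    qed
    have "L = Sop N n r (\<lambda>J. \<Sum>M\<in>MI N (r - m). cpoly (lk (p J) M) * xmon M)"
      unfolding p(2) Sop_def by (intro ext sum.cong refl) (simp add: pexp[symmetric])
    also have "\<dots> = (\<Sum>x\<in>?A. op_scale (lk (p (fst x)) (snd x)) (?g x))"
      using comb[where c = "\<lambda>x. lk (p (fst x)) (snd x)" and N = N and r = r and t = "r - m" and n = n] by simp
    also have "\<dots> \<in> vs.span ?B"
      by (intro vs.span_sum vs.span_scale vs.span_base) auto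
    finally show "L \<in> vs.span ?B" .
  qed
  have indep: "vs.independent ?B"
  proof (rule vs.independent_if_scalars_zero)
    show "finite ?B" using finA by simp
    fix f b assume z: "(\<Sum>x\<in>?B. op_scale (f x) x) = 0" and b: "b \<in> ?B"
    have "(\<Sum>x\<in>?A. op_scale (f (?g x)) (?g x)) = 0"
      using z sum.reindex[OF inj, of "\<lambda>x. op_scale (f x) x"] by simp
    then have S0: "Sop N n r (\<lambda>J. \<Sum>M\<in>MI N (r - m). cpoly (f (?g (J, M))) * xmon M) = Sop N n r (\<lambda>J. 0)"
      using comb[where c = "\<lambda>x. f (?g x)" and N = N and r = r and t = "r - m" and n = n] by (simp add: Sop_def fun_eq_iff)
    obtain J M where JM: "J \<in> MI N r" "M \<in> MI N (r - m)" "b = ?g (J, M)" using b by auto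
    have "(\<lambda>J. \<Sum>M\<in>MI N (r - m). cpoly (f (?g (J, M))) * xmon M) J = (\<lambda>J. 0) J"
      by (rule S_unique[OF rn S0 JM(1)])
    then have "lk (\<Sum>M'\<in>MI N (r - m). cpoly (f (?g (J, M'))) * xmon M') M = 0" by simp
    then show "f b = 0" using lookup_monsum[OF JM(2) finite_MI, of "\<lambda>M'. f (?g (J, M'))"] JM(3) by simp
  qed
  have "vs.dim (Lspace N n r m) = card ?B"
    by (rule vs.dim_unique[OF BL LB indep refl])
  also have "card ?B = card (MI N r) * card (MI N (r - m))"
    using card_image[OF inj] by (simp add: card_cartesian_product)
  also have "\<dots> = ((N + r - m) choose (r - m)) * ((N + r) choose r)"
    using card_MI[OF N1, of r] card_MI[OF N1, of "r - m"] mr by simp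
  finally have P3: "vs.dim (Lspace N n r m) = ((N + r - m) choose (r - m)) * ((N + r) choose r)" .
  show ?thesis using P1 P2 P3 by blast
qed


end
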